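(* Let $(Y,\lambda)\in\{-1,1\}\times\{-1,1\}^m$ follow the Ising model $$P(Y,\lambda)=\frac1Z\exp\Big(\theta_Y Y+\sum_i\theta_i\lambda_iY+\sum_{(i,j)\in E_\lambda}\theta_{ij}\lambda_i\lambda_j\Big),$$ with all canonical parameters positive. Here $E_\lambda$ is a set of $|E_\lambda|=d$ unordered pairs of distinct sources, each source in at most one pair. For a source $i$ that belongs to some pair in $E_\lambda$, $$\bar a_i-a_i\in\Big[\frac{\varepsilon_{\min}b_{\min}}{m-1}-\frac{(d-1)\varepsilon_{\max}}{(m-1)(m-2)b_{\min}^2a_{\min}^2},\ \frac{\varepsilon_{\max}}{(m-1)b_{\min}a_{\min}}\Big].$$ For a source $i$ that belongs to no pair in $E_\lambda$, $$\bar a_i-a_i\in\Big[\frac{-d\varepsilon_{\max}}{(m-1)(m-2)b_{\min}^2a_{\min}^2},\ \frac{-d\varepsilon_{\min}b_{\min}^2}{(m-1)(m-2)}\Big].$$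
   Context: Accuracies. - $a_i=\mathbb E[\lambda_iY]$ and $a_{\min}=\min_ia_i$. - $\bar a_i=\mathbb E_{\{j,k\}}\Big[\sqrt{\mathbb E[\lambda_i\lambda_j]\mathbb E[\lambda_i\lambda_k]/\mathbb E[\lambda_j\lambda_k]}\Big]$, where the unordered pair $\{j,k\}\subset[m]\setminus\{i\}$ is uniformly random. - $b_{\min}$ is a number at most $\min_{i\ne j}\mathbb E[\lambda_i\lambda_j]$. The paper defines it as the minimum over all pairs of both the population pairwise moments $\mathbb E[\lambda_i\lambda_j]$ and their empirical counterparts. Misspecification. For $(i,j)\in E_\lambda$, $\varepsilon_{ij}=\mathbb E[\lambda_i\lambda_j]-\mathbb E[\lambda_iY]\mathbb E[\lambda_jY]$, with $0<\varepsilon_{\min}\le\varepsilon_{ij}\le\varepsilon_{\max}$ for all $(i,j)\in E_\lambda$. *)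

theory Defs
  imports Complex_Main "HOL-Library.FuncSet"
begin

text \<open>Unordered pairs of sources
  (edges of E_lambda) are two-element sets of indices.\<close>

definition ising_space :: "nat \<Rightarrow> (real \<times> (nat \<Rightarrow> real)) set" where
  "ising_space m = {-1, 1} \<times> ({0..<m} \<rightarrow>\<^sub>E {-1, 1})"

definition ising_energy ::
  "nat \<Rightarrow> real \<Rightarrow> (nat \<Rightarrow> real) \<Rightarrow> (nat set \<Rightarrow> real) \<Rightarrow> nat set set
     \<Rightarrow> real \<times> (nat \<Rightarrow> real) \<Rightarrow> real" where
  "ising_energy m thY th thE E w =
     thY * fst w + (\<Sum>i<m. th i * snd w i * fst w) + (\<Sum>e\<in>E. thE e * (\<Prod>k\<in>e. snd w k))"

definition ising_expect ::
  "nat \<Rightarrow> real \<Rightarrow> (nat \<Rightarrow> real) \<Rightarrow> (nat set \<Rightarrow> real) \<Rightarrow> nat set set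
     \<Rightarrow> (real \<times> (nat \<Rightarrow> real) \<Rightarrow> real) \<Rightarrow> real" where
  "ising_expect m thY th thE E f =
     (\<Sum>w\<in>ising_space m. exp (ising_energy m thY th thE E w) * f w)
     / (\<Sum>w\<in>ising_space m. exp (ising_energy m thY th thE E w))"

definition ising_acc ::
  "nat \<Rightarrow> real \<Rightarrow> (nat \<Rightarrow> real) \<Rightarrow> (nat set \<Rightarrow> real) \<Rightarrow> nat set set \<Rightarrow> nat \<Rightarrow> real" where
  "ising_acc m thY th thE E i = ising_expect m thY th thE E (\<lambda>w. snd w i * fst w)"

definition ising_mom ::
  "nat \<Rightarrow> real \<Rightarrow> (nat \<Rightarrow> real) \<Rightarrow> (nat set \<Rightarrow> real) \<Rightarrow> nat set set \<Rightarrow> nat \<Rightarrow> nat \<Rightarrow> real" where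
  "ising_mom m thY th thE E i j = ising_expect m thY th thE E (\<lambda>w. snd w i * snd w j)"

definition ising_amin ::
  "nat \<Rightarrow> real \<Rightarrow> (nat \<Rightarrow> real) \<Rightarrow> (nat set \<Rightarrow> real) \<Rightarrow> nat set set \<Rightarrow> real" where
  "ising_amin m thY th thE E = Min (ising_acc m thY th thE E ` {0..<m})"

text \<open>Unordered pairs {j,k} of [m] - {i}, each represented once as (j,k) with j < k.\<close>
definition other_pairs :: "nat \<Rightarrow> nat \<Rightarrow> (nat \<times> nat) set" where
  "other_pairs m i = {(j, k). j < k \<and> k < m \<and> j \<noteq> i \<and> k \<noteq> i}"

definition ising_abar ::
  "nat \<Rightarrow> real \<Rightarrow> (nat \<Rightarrow> real) \<Rightarrow> (nat set \<Rightarrow> real) \<Rightarrow> nat set set \<Rightarrow> nat \<Rightarrow> real" where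
  "ising_abar m thY th thE E i =
     (\<Sum>(j, k)\<in>other_pairs m i.
        sqrt (ising_mom m thY th thE E i j * ising_mom m thY th thE E i k
              / ising_mom m thY th thE E j k))
     / real (card (other_pairs m i))"

end

theory Submission
  imports Defs
begin



definition swp :: "nat set \<Rightarrow> (real \<times> (nat\<Rightarrow>real)) \<times> (real \<times> (nat\<Rightarrow>real)) \<Rightarrow> (real \<times> (nat\<Rightarrow>real)) \<times> (real \<times> (nat\<Rightarrow>real))" where
 "swp R p = (case p of ((Y,l),(Y',l')) \<Rightarrow> ((Y, \<lambda>x. if x\<in>R then Y*Y'*l' x else l x), (Y', \<lambda>x. if x\<in>R then Y*Y'*l x else l' x)))"

lemma space_finite: "finite (ising_space m)"
  unfolding ising_space_def by (auto intro!: finite_PiE)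

lemma space_ne: "ising_space m \<noteq> {}"
  unfolding ising_space_def by (auto simp: PiE_eq_empty_iff)

lemma pm1_sq: "(x::real) = -1 \<or> x = 1 \<Longrightarrow> x * x = 1" by auto

lemma swp_energy:
  assumes closed: "\<forall>e\<in>E. e \<subseteq> R \<or> e \<inter> R = {}"
    and c2: "\<forall>e\<in>E. card e = 2"
    and Y: "Y = -1 \<or> Y = 1" and Y': "Y' = -1 \<or> Y' = 1"
  shows "ising_energy m thY th thE E (Y, \<lambda>x. if x\<in>R then Y*Y'*l' x else l x)
       + ising_energy m thY th thE E (Y', \<lambda>x. if x\<in>R then Y*Y'*l x else l' x)
       = ising_energy m thY th thE E (Y, l) + ising_energy m thY th thE E (Y', l')"
proof -
  have YY: "Y*Y = 1" "Y'*Y' = 1" using Y Y' by auto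
  have s1: "(\<Sum>i<m. th i * (if i\<in>R then Y*Y'*l' i else l i) * Y) + (\<Sum>i<m. th i * (if i\<in>R then Y*Y'*l i else l' i) * Y')
     = (\<Sum>i<m. th i * l i * Y) + (\<Sum>i<m. th i * l' i * Y')"
  proof -
    have "\<And>i. th i * (if i\<in>R then Y*Y'*l' i else l i) * Y + th i * (if i\<in>R then Y*Y'*l i else l' i) * Y'
       = th i * l i * Y + th i * l' i * Y'"
    proof -
      fix i
      have a: "th i * (Y*Y'*l' i) * Y = th i * l' i * Y'"
        using YY(1) by (metis mult.assoc mult.commute mult.left_commute mult_1_right)
      have b: "th i * (Y*Y'*l i) * Y' = th i * l i * Y"
        using YY(2) by (metis mult.assoc mult.commute mult.left_commute mult_1_right)
      show "th i * (if i\<in>R then Y*Y'*l' i else l i) * Y + th i * (if i\<in>R then Y*Y'*l i else l' i) * Y'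
       = th i * l i * Y + th i * l' i * Y'"
      proof (cases "i\<in>R")
        case True
        show ?thesis unfolding if_P[OF True] a b by (rule add.commute)
      qed simp
    qed
    then show ?thesis by (simp add: sum.distrib[symmetric])
  qed
  have pr: "(\<Prod>k\<in>e. (if k\<in>R then Y*Y'*f k else g k)) = (if e \<subseteq> R then (\<Prod>k\<in>e. f k) else (\<Prod>k\<in>e. g k))"
    if "e \<in> E" for e f g
  proof (cases "e \<subseteq> R")
    case True
    have "(\<Prod>k\<in>e. (if k\<in>R then Y*Y'*f k else g k)) = (\<Prod>k\<in>e. (Y*Y') * f k)"
      using True by (intro prod.cong) auto
    also have "\<dots> = (Y*Y')^2 * (\<Prod>k\<in>e. f k)" using c2 that by (simp add: prod.distrib)
    also have "\<dots> = (\<Prod>k\<in>e. f k)" using YY by (simp add: power2_eq_square algebra_simps)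
    finally show ?thesis using True by simp
  next
    case False
    then have "e \<inter> R = {}" using closed that by auto
    then have "(\<Prod>k\<in>e. (if k\<in>R then Y*Y'*f k else g k)) = (\<Prod>k\<in>e. g k)"
      by (intro prod.cong) auto
    then show ?thesis using False by simp
  qed
  have s2: "(\<Sum>e\<in>E. thE e * (\<Prod>k\<in>e. (if k\<in>R then Y*Y'*l' k else l k)))
      + (\<Sum>e\<in>E. thE e * (\<Prod>k\<in>e. (if k\<in>R then Y*Y'*l k else l' k)))
      = (\<Sum>e\<in>E. thE e * (\<Prod>k\<in>e. l k)) + (\<Sum>e\<in>E. thE e * (\<Prod>k\<in>e. l' k))"
    apply (simp add: sum.distrib[symmetric] pr algebra_simps cong: sum.cong)
    apply (rule sum.cong) apply auto done
  show ?thesis unfolding ising_energy_def using s1 s2 by simp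
qed

lemma pm1_mult: "(x::real) \<in> {-1,1} \<Longrightarrow> y \<in> {-1,1} \<Longrightarrow> x*y \<in> {-1,1}" by auto

lemma swp_mem:
  assumes R: "R \<subseteq> {0..<m}" and p: "p \<in> ising_space m \<times> ising_space m"
  shows "swp R p \<in> ising_space m \<times> ising_space m"
proof -
  obtain Y l Y' l' where pe: "p = ((Y,l),(Y',l'))" by (metis prod.exhaust)
  have Y: "Y \<in> {-1,1}" "Y' \<in> {-1,1}" and l: "l \<in> {0..<m} \<rightarrow>\<^sub>E {-1,1}" "l' \<in> {0..<m} \<rightarrow>\<^sub>E {-1,1}"
    using p unfolding pe ising_space_def by auto
  have "(\<lambda>x. if x\<in>R then Y*Y'*l' x else l x) \<in> {0..<m} \<rightarrow>\<^sub>E {-1,1}"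
    using l Y R unfolding PiE_iff extensional_def by (auto intro!: pm1_mult)
  moreover have "(\<lambda>x. if x\<in>R then Y*Y'*l x else l' x) \<in> {0..<m} \<rightarrow>\<^sub>E {-1,1}"
    using l Y R unfolding PiE_iff extensional_def by (auto intro!: pm1_mult)
  ultimately show ?thesis using Y unfolding pe swp_def ising_space_def by auto
qed

lemma swp_swp:
  assumes p: "p \<in> ising_space m \<times> ising_space m"
  shows "swp R (swp R p) = p"
proof -
  obtain Y l Y' l' where pe: "p = ((Y,l),(Y',l'))" by (metis prod.exhaust)
  have Y: "Y \<in> {-1,1}" "Y' \<in> {-1,1}" 
    using p unfolding pe ising_space_def by auto
  have YY: "Y*Y'*(Y*Y'*z) = z" for z using Y by auto
  show ?thesis unfolding pe swp_def by (auto simp: YY)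
qed

lemma swp_bij: "R \<subseteq> {0..<m} \<Longrightarrow> bij_betw (swp R) (ising_space m \<times> ising_space m) (ising_space m \<times> ising_space m)"
  apply (rule bij_betw_byWitness[where f'="swp R"])
  using swp_swp swp_mem by blast+

lemma expect_eq: "ising_expect m thY th thE E f = (\<Sum>w\<in>ising_space m. exp (ising_energy m thY th thE E w) * f w) / (\<Sum>w\<in>ising_space m. exp (ising_energy m thY th thE E w))"
  by (simp add: ising_expect_def)

lemma mom_factor:
  assumes c2: "\<forall>e\<in>E. card e = 2"
    and closed: "\<forall>e\<in>E. e \<subseteq> R \<or> e \<inter> R = {}"
    and R: "R \<subseteq> {0..<m}" and j: "j \<notin> R" and k: "k \<in> R"
  shows "ising_mom m thY th thE E j k = ising_acc m thY th thE E j * ising_acc m thY th thE E k"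
proof -
  define S where "S = ising_space m"
  define W where "W w = exp (ising_energy m thY th thE E w)" for w
  define F where "F p = W (fst p) * W (snd p) * (snd (fst p) j * snd (fst p) k)" for p
  define G where "G p = W (fst p) * W (snd p) * ((snd (fst p) j * fst (fst p)) * (snd (snd p) k * fst (snd p)))" for p
  have "sum F (S \<times> S) = sum (\<lambda>p. F (swp R p)) (S \<times> S)"
    using sum.reindex_bij_betw[OF swp_bij[OF R], of F] unfolding S_def by simp
  also have "\<dots> = sum G (S \<times> S)"
  proof (rule sum.cong)
    fix p assume p: "p \<in> S \<times> S"
    obtain Y l Y' l' where pe: "p = ((Y,l),(Y',l'))" by (metis prod.exhaust)
    have Y: "Y = -1 \<or> Y = 1" "Y' = -1 \<or> Y' = 1"
      using p unfolding pe S_def ising_space_def by auto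
    have en: "W (Y, \<lambda>x. if x\<in>R then Y*Y'*l' x else l x) * W (Y', \<lambda>x. if x\<in>R then Y*Y'*l x else l' x)
        = W (Y,l) * W (Y',l')"
      unfolding W_def exp_add[symmetric] using swp_energy[OF closed c2 Y] by simp
    have "l j * (Y * Y' * l' k) = l j * Y * (l' k * Y')" by (simp add: algebra_simps)
    then show "F (swp R p) = G p" unfolding F_def G_def pe swp_def using j k en by simp
  qed simp
  finally have eq: "sum F (S \<times> S) = sum G (S \<times> S)" .
  have F: "sum F (S \<times> S) = (\<Sum>w\<in>S. W w * (snd w j * snd w k)) * (\<Sum>w\<in>S. W w)"
    unfolding sum_product sum.cartesian_product F_def by (simp add: algebra_simps case_prod_beta)
  have G: "sum G (S \<times> S) = (\<Sum>w\<in>S. W w * (snd w j * fst w)) * (\<Sum>w\<in>S. W w * (snd w k * fst w))"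
    unfolding sum_product sum.cartesian_product G_def by (simp add: algebra_simps case_prod_beta)
  have Zpos: "(\<Sum>w\<in>S. W w) > 0"
    unfolding S_def W_def by (intro sum_pos space_finite space_ne) auto
  show ?thesis
    unfolding ising_mom_def ising_acc_def expect_eq W_def[symmetric] S_def[symmetric]
    using eq F G Zpos by (simp add: field_simps power2_eq_square)
qed




definition flp :: "nat \<Rightarrow> real \<times> (nat\<Rightarrow>real) \<Rightarrow> real \<times> (nat\<Rightarrow>real)" where
  "flp i w = (fst w, (snd w)(i := - snd w i))"

lemma flp_mem: "i < m \<Longrightarrow> w \<in> ising_space m \<Longrightarrow> flp i w \<in> ising_space m"
  unfolding flp_def ising_space_def by (cases w) (auto simp: PiE_iff extensional_def)

lemma flp_flp: "flp i (flp i w) = w"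
  unfolding flp_def by (cases w) auto

lemma flp_bij: "i < m \<Longrightarrow> bij_betw (flp i) (ising_space m) (ising_space m)"
  apply (rule bij_betw_byWitness[where f'="flp i"])
  using flp_flp flp_mem by blast+

lemma sum_flp: "i < m \<Longrightarrow> (\<Sum>w\<in>ising_space m. f (flp i w)) = (\<Sum>w\<in>ising_space m. f w)"
  using sum.reindex_bij_betw[OF flp_bij] by blast

lemma flp_energy:
  assumes fin: "finite E" and fe: "\<forall>e\<in>E. finite e" and i: "i < m"
  shows "ising_energy m thY th thE E (flp i w) = ising_energy m thY th thE E w
     - 2 * th i * snd w i * fst w - 2 * (\<Sum>e\<in>{e\<in>E. i \<in> e}. thE e * (\<Prod>k\<in>e. snd w k))"
proof -
  have s1: "(\<Sum>l<m. th l * ((snd w)(i := - snd w i)) l * fst w)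
      = (\<Sum>l<m. th l * snd w l * fst w - (if l = i then 2 * th i * snd w i * fst w else 0))"
    by (rule sum.cong) auto
  have s1': "(\<Sum>l<m. th l * ((snd w)(i := - snd w i)) l * fst w)
      = (\<Sum>l<m. th l * snd w l * fst w) - 2 * th i * snd w i * fst w"
    unfolding s1 sum_subtractf using i by simp
  have pr: "(\<Prod>k\<in>e. ((snd w)(i := - snd w i)) k) = (if i \<in> e then - (\<Prod>k\<in>e. snd w k) else (\<Prod>k\<in>e. snd w k))"
    if "e \<in> E" for e
  proof (cases "i \<in> e")
    case True
    have f: "finite e" using fe that by auto
    have "(\<Prod>k\<in>e. ((snd w)(i := - snd w i)) k) = ((snd w)(i := - snd w i)) i * (\<Prod>k\<in>e-{i}. ((snd w)(i := - snd w i)) k)"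
      using prod.remove[OF f True] by blast
    also have "\<dots> = - snd w i * (\<Prod>k\<in>e-{i}. snd w k)"
    proof -
      have "(\<Prod>k\<in>e-{i}. ((snd w)(i := - snd w i)) k) = (\<Prod>k\<in>e-{i}. snd w k)" by (rule prod.cong) auto
      then show ?thesis by simp
    qed
    also have "\<dots> = - (\<Prod>k\<in>e. snd w k)" using prod.remove[OF f True, of "snd w"] by simp
    finally show ?thesis using True by simp
  qed (auto intro!: prod.cong)
  have s2: "(\<Sum>e\<in>E. thE e * (\<Prod>k\<in>e. ((snd w)(i := - snd w i)) k))
     = (\<Sum>e\<in>E. thE e * (\<Prod>k\<in>e. snd w k) - (if i \<in> e then 2 * (thE e * (\<Prod>k\<in>e. snd w k)) else 0))"
  proof (rule sum.cong)
    fix e assume e: "e \<in> E"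
    show "thE e * (\<Prod>k\<in>e. ((snd w)(i := - snd w i)) k) = thE e * (\<Prod>k\<in>e. snd w k) - (if i \<in> e then 2 * (thE e * (\<Prod>k\<in>e. snd w k)) else 0)"
      unfolding pr[OF e] by simp
  qed simp
  have s2': "(\<Sum>e\<in>E. thE e * (\<Prod>k\<in>e. ((snd w)(i := - snd w i)) k))
     = (\<Sum>e\<in>E. thE e * (\<Prod>k\<in>e. snd w k)) - 2 * (\<Sum>e\<in>{e\<in>E. i \<in> e}. thE e * (\<Prod>k\<in>e. snd w k))"
    unfolding s2 sum_subtractf sum.inter_filter[OF fin] sum_distrib_left
    by (simp add: if_distrib cong: if_cong)
  show ?thesis unfolding ising_energy_def flp_def using s1' s2' by simp
qed




lemma h_pos:
  fixes a b q :: real assumes a: "a > 0" and b: "b > 0" and q: "q \<ge> 0"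
  shows "exp (a+b+q) - exp (-a+b-q) + exp (a-b-q) - exp (-a-b+q) > 0"
proof -
  define A where "A = exp (2*a)"
  define B where "B = exp (2*b)"
  define T where "T = exp (2*q)"
  have A: "A > 1" unfolding A_def using a by simp
  have B: "B > 1" unfolding B_def using b by simp
  have T: "T \<ge> 1" unfolding T_def using q by simp
  have key: "A*B*T - B + A - T > 0"
  proof -
    have "T*(A*B - 1) \<ge> 1*(A*B-1)" using T A B
      by (intro mult_right_mono) (auto simp: less_1_mult less_imp_le)
    moreover have "(A - 1) * (B + 1) > 0" using A B by simp
    ultimately show ?thesis by (simp add: algebra_simps)
  qed
  have e: "exp (a+b+q) * (exp (a+b+q) - exp (-a+b-q) + exp (a-b-q) - exp (-a-b+q)) = A*B*T - B + A - T"
    unfolding A_def B_def T_def by (simp add: algebra_simps exp_add[symmetric])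
  have "exp (a+b+q) * (exp (a+b+q) - exp (-a+b-q) + exp (a-b-q) - exp (-a-b+q)) > 0"
    using e key by simp
  then show ?thesis by (simp add: zero_less_mult_iff)
qed

lemma g_pos:
  fixes a b q x s t :: real assumes a: "a > 0" and b: "b > 0" and q: "q \<ge> 0"
    and s: "s = -1 \<or> s = 1" and t: "t = -1 \<or> t = 1"
  shows "exp x * s - exp (x - 2*a*s - 2*q*(s*t)) * s + exp (x - 2*b*t - 2*q*(s*t)) * s
       - exp (x - 2*b*t - 2*a*s) * s > 0"
proof -
  define c where "c = x - a*s - b*t - q*(s*t)"
  have x: "x = c + a*s + b*t + q*(s*t)" unfolding c_def by simp
  have h: "exp (a+b+q) - exp (-a+b-q) + exp (a-b-q) - exp (-a-b+q) > 0" by (rule h_pos[OF a b q])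
  have "exp x * s - exp (x - 2*a*s - 2*q*(s*t)) * s + exp (x - 2*b*t - 2*q*(s*t)) * s
       - exp (x - 2*b*t - 2*a*s) * s = exp c * (exp (a+b+q) - exp (-a+b-q) + exp (a-b-q) - exp (-a-b+q))"
    unfolding x using s t
    by (auto simp: exp_add[symmetric] algebra_simps)
  then show ?thesis using h by simp
qed

lemma g1_pos:
  fixes a x s :: real assumes a: "a > 0" and s: "s = -1 \<or> s = 1"
  shows "exp x * s - exp (x - 2*a*s) * s > 0"
proof -
  define c where "c = x - a*s"
  have x: "x = c + a*s" unfolding c_def by simp
  have "exp x * s - exp (x - 2*a*s) * s = exp c * (exp a - exp (-a))"
    unfolding x using s by (auto simp: exp_add[symmetric] algebra_simps)
  moreover have "exp a - exp (-a) > 0" using a by simp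
  ultimately show ?thesis by simp
qed




lemma Z_pos: "(\<Sum>w\<in>ising_space m. exp (ising_energy m thY th thE E w)) > 0"
  by (intro sum_pos space_finite space_ne) auto

lemma space_Y: "w \<in> ising_space m \<Longrightarrow> fst w = -1 \<or> fst w = 1"
  unfolding ising_space_def by auto

lemma space_l: "w \<in> ising_space m \<Longrightarrow> i < m \<Longrightarrow> snd w i = -1 \<or> snd w i = 1"
  unfolding ising_space_def by (auto simp: PiE_iff)

lemma acc_pos_single:
  assumes fin: "finite E" and fe: "\<forall>e\<in>E. finite e" and i: "i < m"
    and noe: "\<forall>e\<in>E. i \<notin> e" and thi: "th i > 0"
  shows "ising_acc m thY th thE E i > 0"
proof -
  define f where "f w = exp (ising_energy m thY th thE E w) * (snd w i * fst w)" for w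
  have emp: "{e\<in>E. i \<in> e} = {}" using noe by auto
  have "2 * sum f (ising_space m) = (\<Sum>w\<in>ising_space m. f w + f (flp i w))"
    unfolding sum.distrib sum_flp[OF i] by simp
  also have "\<dots> > 0"
  proof (intro sum_pos space_finite space_ne)
    fix w assume w: "w \<in> ising_space m"
    have s: "snd w i * fst w = -1 \<or> snd w i * fst w = 1"
      using space_Y[OF w] space_l[OF w i] by auto
    have "f w + f (flp i w) = exp (ising_energy m thY th thE E w) * (snd w i * fst w)
       - exp (ising_energy m thY th thE E w - 2 * th i * (snd w i * fst w)) * (snd w i * fst w)"
      unfolding f_def flp_energy[OF fin fe i] emp by (simp add: flp_def algebra_simps)
    also have "\<dots> > 0" by (rule g1_pos[OF thi s])
    finally show "f w + f (flp i w) > 0" .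
  qed
  finally have "sum f (ising_space m) > 0" by simp
  then show ?thesis unfolding ising_acc_def ising_expect_def f_def
    using Z_pos by simp
qed

lemma acc_pos_pair:
  assumes fin: "finite E" and fe: "\<forall>e\<in>E. finite e" and i: "i < m" and p: "p < m"
    and ip: "i \<noteq> p" and eip: "{i,p} \<in> E"
    and disj: "\<forall>e\<in>E. \<forall>e'\<in>E. e \<noteq> e' \<longrightarrow> e \<inter> e' = {}"
    and thi: "th i > 0" and thp: "th p > 0" and q: "thE {i,p} \<ge> 0"
  shows "ising_acc m thY th thE E i > 0"
proof -
  define f where "f w = exp (ising_energy m thY th thE E w) * (snd w i * fst w)" for w
  have d: "e = e'" if "e \<in> E" "e' \<in> E" "x \<in> e" "x \<in> e'" for e e' x
    using disj that by blast
  have ei: "{e\<in>E. i \<in> e} = {{i,p}}"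
  proof (intro equalityI subsetI)
    fix e assume "e \<in> {e\<in>E. i \<in> e}"
    then have "e \<in> E" "i \<in> e" by auto
    then have "e = {i,p}" using d[OF _ eip, of e i] by simp
    then show "e \<in> {{i,p}}" by simp
  qed (use eip in simp)
  have ep: "{e\<in>E. p \<in> e} = {{i,p}}"
  proof (intro equalityI subsetI)
    fix e assume "e \<in> {e\<in>E. p \<in> e}"
    then have "e \<in> E" "p \<in> e" by auto
    then have "e = {i,p}" using d[OF _ eip, of e p] by simp
    then show "e \<in> {{i,p}}" by simp
  qed (use eip in simp)
  have "4 * sum f (ising_space m) = (\<Sum>w\<in>ising_space m. f w + f (flp i w) + f (flp p w) + f (flp i (flp p w)))"
    unfolding sum.distrib sum_flp[OF i] sum_flp[OF p, where f="\<lambda>w. f (flp i w)"] sum_flp[OF p] by simp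
  also have "\<dots> > 0"
  proof (intro sum_pos space_finite space_ne)
    fix w assume w: "w \<in> ising_space m"
    define s where "s = snd w i * fst w"
    define t where "t = snd w p * fst w"
    have Y: "fst w * fst w = 1" using space_Y[OF w] by auto
    have s: "s = -1 \<or> s = 1" unfolding s_def
      using space_Y[OF w] space_l[OF w i] by auto
    have t: "t = -1 \<or> t = 1" unfolding t_def
      using space_Y[OF w] space_l[OF w p] by auto
    have st: "snd w i * snd w p = s * t" unfolding s_def t_def
      by (metis Y mult.assoc mult.commute mult_1_right)
    have pr: "(\<Prod>k\<in>{i,p}. g k) = g i * g p" for g :: "nat \<Rightarrow> real" using ip by simp
    define x where "x = ising_energy m thY th thE E w"
    have e1: "ising_energy m thY th thE E (flp i w) = x - 2*th i*s - 2*thE {i,p}*(s*t)"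
      unfolding flp_energy[OF fin fe i] ei x_def using pr st s_def by simp
    have e2: "ising_energy m thY th thE E (flp p w) = x - 2*th p*t - 2*thE {i,p}*(s*t)"
      unfolding flp_energy[OF fin fe p] ep x_def using pr st t_def by (simp add: algebra_simps; metis mult.commute)
    have e3: "ising_energy m thY th thE E (flp i (flp p w)) = x - 2*th p*t - 2*th i*s"
      unfolding flp_energy[OF fin fe i] ei e2 using pr st ip unfolding s_def t_def
      by (simp add: flp_def algebra_simps; blast)
    have "f w + f (flp i w) + f (flp p w) + f (flp i (flp p w)) =
       exp x * s - exp (x - 2*th i*s - 2*thE {i,p}*(s*t)) * s + exp (x - 2*th p*t - 2*thE {i,p}*(s*t)) * s
       - exp (x - 2*th p*t - 2*th i*s) * s"
      unfolding f_def e1 e2 e3 unfolding x_def s_def using ip by (simp add: flp_def algebra_simps)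
    also have "\<dots> > 0" by (rule g_pos[OF thi thp q s t])
    finally show "f w + f (flp i w) + f (flp p w) + f (flp i (flp p w)) > 0" .
  qed
  finally have "sum f (ising_space m) > 0" by simp
  then show ?thesis unfolding ising_acc_def ising_expect_def f_def
    using Z_pos by simp
qed




lemma term_edge:
  fixes A x eps b c :: real
  assumes eps: "eps > 0" and b: "b > 0" and b1: "b \<le> 1" and bM: "b \<le> x + eps" and M1: "x + eps \<le> 1"
    and c: "c > 0" and c1: "c \<le> 1" and cx: "c*c \<le> x" and Ab: "b \<le> A" and A1: "A \<le> 1"
  shows "sqrt (A*A * (x / (x + eps))) - A \<le> - (eps * b^2 / 2)"
    and "sqrt (A*A * (x / (x + eps))) - A \<ge> - (eps / (2 * b^2 * c^2))"
    and "sqrt (A*A * (x / (x + eps))) - A \<le> 0"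
proof -
  define M where "M = x + eps"
  have Mpos: "M > 0" using b bM unfolding M_def by simp
  have xpos: "x > 0" using c cx by (smt (verit) mult_pos_pos)
  define u where "u = sqrt (x / M)"
  have A0: "A > 0" using b Ab by simp
  have T: "sqrt (A*A * (x / M)) = A * u" unfolding u_def using A0
    by (simp only: real_sqrt_mult real_sqrt_mult_self abs_of_pos)
  have u0: "u \<ge> 0" unfolding u_def using xpos Mpos by simp
  have uu: "u * u = x / M" unfolding u_def using xpos Mpos by simp
  have xM: "x / M < 1" using xpos Mpos eps unfolding M_def by simp
  have u1: "u \<le> 1" unfolding u_def using xM by simp
  have xM2: "x \<le> x / M" using xpos Mpos M1 unfolding M_def
    by (simp add: le_divide_eq mult_le_cancel_left1)
  have uc: "c \<le> u" unfolding u_def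
    using real_sqrt_le_mono[of "c*c" "x/M"] cx xM2 c by simp
  have key: "(1 - u) * (1 + u) = eps / M" using uu Mpos unfolding M_def
    by (simp add: algebra_simps field_simps)
  have nz: "1 + u \<noteq> 0" using u0 by simp
  have oneu: "1 - u = (eps / M) / (1 + u)"
    by (metis key nz nonzero_mult_div_cancel_right)
  have em: "eps / M \<ge> eps" using eps Mpos M1 unfolding M_def by (simp add: le_divide_eq mult_le_cancel_left1)
  have em2: "eps / M \<le> eps / b" using eps Mpos bM b unfolding M_def by (simp add: frac_le)
  have "A * (1 - u) \<ge> b * (eps / 2)"
  proof -
    have "1 - u \<ge> eps / 2" unfolding oneu using em u0 u1 eps
      by (smt (verit, ccfv_SIG) divide_left_mono frac_le)
    then show ?thesis using Ab u1 eps b by (intro mult_mono) auto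
  qed
  moreover have "b * (eps / 2) \<ge> eps * b^2 / 2" using b b1 eps
    by (simp add: power2_eq_square mult_le_cancel_left1 mult.commute mult.left_commute)
  ultimately show "sqrt (A*A * (x / (x + eps))) - A \<le> - (eps * b^2 / 2)"
    using T unfolding M_def by (simp add: algebra_simps)
  show "sqrt (A*A * (x / (x + eps))) - A \<le> 0" using T u1 A0 unfolding M_def
    by (simp add: mult_le_cancel_left1)
  have "A * (1 - u) \<le> 1 * ((eps / b) / (1 + c))"
  proof (rule mult_mono)
    show "1 - u \<le> eps / b / (1 + c)" unfolding oneu using em2 uc c u0 eps b
      by (smt (verit, best) divide_pos_pos frac_le)
  qed (use A1 u1 in auto)
  moreover have "(eps / b) / (1 + c) \<le> eps / (2 * b^2 * c^2)"
  proof -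
    have "2 * b * c^2 \<le> 1 + c"
    proof -
      have "b * c^2 \<le> 1 * c" using b1 c c1 b
        by (intro mult_mono) (auto simp: power2_eq_square mult_le_cancel_left1)
      moreover have "c \<le> 1" by (rule c1)
      ultimately show ?thesis by simp
    qed
    then have "b * (2 * b * c^2) \<le> b * (1 + c)" using b by simp
    then have le: "2 * b^2 * c^2 \<le> b * (1 + c)" by (simp add: power2_eq_square algebra_simps)
    have "eps / (b * (1 + c)) \<le> eps / (2 * b^2 * c^2)"
      by (rule divide_left_mono[OF le]) (use eps b c in auto)
    then show ?thesis by (simp add: divide_divide_eq_left)
  qed
  ultimately show "sqrt (A*A * (x / (x + eps))) - A \<ge> - (eps / (2 * b^2 * c^2))"
    using T unfolding M_def by (simp add: algebra_simps)
qed

lemma term_partner: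
  fixes A P eps b c :: real
  assumes eps: "eps > 0" and b: "b > 0" and b1: "b \<le> 1" and M1: "A * P + eps \<le> 1"
    and c: "c > 0" and cP: "c \<le> P" and P1: "P \<le> 1" and Ab: "b \<le> A" and A1: "A \<le> 1" and Pb: "b \<le> P"
  shows "sqrt (A*A * ((A*P + eps) / (A*P))) - A \<le> eps / (2 * b * c)"
    and "sqrt (A*A * ((A*P + eps) / (A*P))) - A \<ge> eps * b / 2"
proof -
  have A0: "A > 0" using b Ab by simp
  have P0: "P > 0" using c cP by simp
  define v where "v = sqrt ((A*P + eps) / (A*P))"
  have T: "sqrt (A*A * ((A*P + eps) / (A*P))) = A * v" unfolding v_def using A0
    by (simp only: real_sqrt_mult real_sqrt_mult_self abs_of_pos)
  have q1: "(A*P + eps) / (A*P) \<ge> 1" using A0 P0 eps by simp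
  have v1: "v \<ge> 1" unfolding v_def using q1 by simp
  have vv: "v * v = (A*P + eps) / (A*P)" unfolding v_def using q1 by (simp only: real_sqrt_mult_self abs_of_nonneg)
  have key: "A * (v - 1) * (v + 1) = eps / P"
  proof -
    have "A * (v - 1) * (v + 1) = A * (v*v) - A" by (simp add: algebra_simps)
    also have "\<dots> = eps / P" unfolding vv using A0 P0 by (simp add: field_simps)
    finally show ?thesis .
  qed
  have nz: "v + 1 \<noteq> 0" using v1 by simp
  have D: "A * v - A = (eps / P) / (v + 1)"
    by (metis key nz nonzero_mult_div_cancel_right right_diff_distrib mult_1_right)
  have "(eps / P) / (v + 1) \<le> (eps / P) / 2"
    using v1 eps P0 by (intro divide_left_mono) auto
  also have "\<dots> \<le> eps / (2 * b * c)"
  proof -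
    have "b * c \<le> 1 * P" using b1 cP b c by (intro mult_mono) auto
    then have "eps / P \<le> eps / (b * c)" using eps b c P0 by (intro divide_left_mono) auto
    then show ?thesis by (simp add: divide_divide_eq_left mult.commute mult.left_commute)
  qed
  finally show "sqrt (A*A * ((A*P + eps) / (A*P))) - A \<le> eps / (2 * b * c)" using T D by simp
  have vb: "v \<le> 1 / b"
  proof -
    have "b * b \<le> A * P" using Ab Pb b by (intro mult_mono) auto
    then have "(A*P + eps) / (A*P) \<le> 1 / (b*b)" using M1 A0 P0 b eps
      by (smt (verit, best) divide_right_mono frac_le mult_pos_pos)
    then have "v \<le> sqrt (1 / (b*b))" unfolding v_def by simp
    also have "\<dots> = 1 / b" using b by (simp add: real_sqrt_divide)
    finally show ?thesis .
  qed
  have "eps * b / 2 \<le> eps / (v + 1)"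
  proof -
    have ob: "1 \<le> 1 / b" using b b1 by simp
    have h2: "2 / b = 1/b + 1/b" by (simp add: add_divide_distrib[symmetric])
    have "v + 1 \<le> 2 / b" using vb ob h2 by linarith
    then have "eps / (2 / b) \<le> eps / (v + 1)" using eps v1 b by (intro divide_left_mono) auto
    then show ?thesis by simp
  qed
  also have "eps / (v + 1) \<le> (eps / P) / (v + 1)"
    using eps P0 P1 v1 by (intro divide_right_mono) (auto simp: le_divide_eq)
  finally show "sqrt (A*A * ((A*P + eps) / (A*P))) - A \<ge> eps * b / 2" using T D by simp
qed




lemma expect_le1:
  assumes "\<forall>w\<in>ising_space m. f w \<le> 1"
  shows "ising_expect m thY th thE E f \<le> 1"
proof -
  have "(\<Sum>w\<in>ising_space m. exp (ising_energy m thY th thE E w) * f w) \<le> (\<Sum>w\<in>ising_space m. exp (ising_energy m thY th thE E w))"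
    using assms by (intro sum_mono) (simp add: mult_le_cancel_left1)
  then show ?thesis unfolding ising_expect_def using Z_pos[of m thY th thE E]
    by (simp add: pos_divide_le_eq)
qed

lemma pm_le1: "(x::real) = -1 \<or> x = 1 \<Longrightarrow> y = -1 \<or> y = 1 \<Longrightarrow> x * y \<le> 1" by auto

lemma pair_inj: "inj_on (\<lambda>(j::nat,k). {j,k}) {(j,k). j < k}"
  unfolding inj_on_def by (auto simp: doubleton_eq_iff)

lemma card_pairs_img:
  assumes "Q \<subseteq> {(j::nat,k). j < k}"
  shows "card Q = card ((\<lambda>(j,k). {j,k}) ` Q)"
  using card_image[OF inj_on_subset[OF pair_inj assms]] by simp

lemma card_other_pairs:
  assumes i: "i < m"
  shows "card (other_pairs m i) = (m - 1) choose 2"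
proof -
  have sub: "other_pairs m i \<subseteq> {(j,k). j < k}" unfolding other_pairs_def by auto
  have img: "(\<lambda>(j,k). {j,k}) ` other_pairs m i = {B. B \<subseteq> {0..<m} - {i} \<and> card B = 2}"
  proof (intro equalityI subsetI)
    fix B assume "B \<in> (\<lambda>(j,k). {j,k}) ` other_pairs m i"
    then show "B \<in> {B. B \<subseteq> {0..<m} - {i} \<and> card B = 2}" unfolding other_pairs_def by auto
  next
    fix B assume "B \<in> {B. B \<subseteq> {0..<m} - {i} \<and> card B = 2}"
    then obtain x y where B: "B = {x,y}" "x \<noteq> y" "B \<subseteq> {0..<m} - {i}" unfolding card_2_iff by auto
    have "(min x y, max x y) \<in> other_pairs m i" using B unfolding other_pairs_def by (auto simp: min_def max_def)
    moreover have "B = (\<lambda>(j,k). {j,k}) (min x y, max x y)" using B by (auto simp: min_def max_def)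
    ultimately show "B \<in> (\<lambda>(j,k). {j,k}) ` other_pairs m i" by blast
  qed
  have "card (other_pairs m i) = card {B. B \<subseteq> {0..<m} - {i} \<and> card B = 2}"
    using card_pairs_img[OF sub] img by simp
  also have "\<dots> = card ({0..<m} - {i}) choose 2" by (rule n_subsets) simp
  also have "card ({0..<m} - {i}) = m - 1" using i by simp
  finally show ?thesis .
qed

lemma card_other_pairs_real:
  assumes i: "i < m" and m: "m \<ge> 3"
  shows "real (card (other_pairs m i)) = (real m - 1) * (real m - 2) / 2"
proof -
  have "(m - 1) choose 2 = (m - 1) * (m - 2) div 2" by (metis choose_two diff_diff_left one_add_one)
  moreover have "even ((m - 1) * (m - 2))" by simp
  ultimately have "real ((m - 1) choose 2) = real ((m - 1) * (m - 2)) / 2"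
    by (simp add: real_of_nat_div)
  then show ?thesis unfolding card_other_pairs[OF i] using m by (simp add: of_nat_diff)
qed




context
  fixes m :: nat and thY :: real and th :: "nat \<Rightarrow> real"
    and thE :: "nat set \<Rightarrow> real" and E :: "nat set set"
    and bmin epsmin epsmax :: real
  assumes m3: "m \<ge> 3"
    and E_pairs: "\<forall>e\<in>E. e \<subseteq> {0..<m} \<and> card e = 2"
    and E_disj: "\<forall>e\<in>E. \<forall>e'\<in>E. e \<noteq> e' \<longrightarrow> e \<inter> e' = {}"
    and th_pos: "\<forall>j<m. th j > 0"
    and thE_pos: "\<forall>e\<in>E. thE e > 0"
    and bmin_pos: "bmin > 0"
    and bmin_le: "\<forall>j<m. \<forall>k<m. j \<noteq> k \<longrightarrow> bmin \<le> ising_mom m thY th thE E j k"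
begin

lemma finE: "finite E"
  using E_pairs by (intro finite_subset[of E "Pow {0..<m}"]) auto

lemma fin_e: "\<forall>e\<in>E. finite e" using E_pairs card.infinite by fastforce

lemma card2: "\<forall>e\<in>E. card e = 2" using E_pairs by auto

lemma edge_ne: "{j,k} \<in> E \<Longrightarrow> j \<noteq> k" using card2 by fastforce

lemma edge_lt: "{j,k} \<in> E \<Longrightarrow> j < m \<and> k < m" using E_pairs by auto

lemma edge_same: "e \<in> E \<Longrightarrow> e' \<in> E \<Longrightarrow> x \<in> e \<Longrightarrow> x \<in> e' \<Longrightarrow> e = e'"
  using E_disj by blast

lemma edge_uniq: "{j,k} \<in> E \<Longrightarrow> {j,q} \<in> E \<Longrightarrow> q = k"
proof -
  assume a: "{j,k} \<in> E" "{j,q} \<in> E"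
  then have "{j,k} = {j,q}" using edge_same[of "{j,k}" "{j,q}" j] by simp
  then show "q = k" using edge_ne[OF a(1)] edge_ne[OF a(2)] by (auto simp: doubleton_eq_iff)
qed

lemma M_sym: "ising_mom m thY th thE E j k = ising_mom m thY th thE E k j"
  unfolding ising_mom_def by (simp add: mult.commute)

lemma M_le1: "j < m \<Longrightarrow> k < m \<Longrightarrow> ising_mom m thY th thE E j k \<le> 1"
  unfolding ising_mom_def by (intro expect_le1 ballI pm_le1 space_l) auto

lemma a_le1: "j < m \<Longrightarrow> ising_acc m thY th thE E j \<le> 1"
  unfolding ising_acc_def by (intro expect_le1 ballI pm_le1 space_l space_Y) auto

lemma noedge_factor:
  assumes j: "j < m" and k: "k < m" and jk: "j \<noteq> k" and ne: "{j,k} \<notin> E"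
  shows "ising_mom m thY th thE E j k = ising_acc m thY th thE E j * ising_acc m thY th thE E k"
proof -
  define R where "R = {l. l < m \<and> l \<noteq> j \<and> {j,l} \<notin> E}"
  have closed: "\<forall>e\<in>E. e \<subseteq> R \<or> e \<inter> R = {}"
  proof
    fix e assume e: "e \<in> E"
    then obtain x y where exy: "e = {x,y}" "x \<noteq> y" using card2 unfolding card_2_iff by blast
    show "e \<subseteq> R \<or> e \<inter> R = {}"
    proof (cases "j \<in> e")
      case True
      have "z \<notin> R" if "z \<in> e" for z
      proof (cases "z = j")
        case False
        then have "e = {j,z}" using True that exy by auto
        then show ?thesis unfolding R_def using e by auto
      qed (simp add: R_def)
      then show ?thesis by auto
    next
      case False
      have "z \<in> R" if "z \<in> e" for z
      proof -
        have "e \<subseteq> {0..<m}" using e E_pairs by blast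
        then have "z < m" using that by auto
        moreover have "z \<noteq> j" using False that by auto
        moreover have "{j,z} \<notin> E"
        proof
          assume "{j,z} \<in> E"
          then have "{j,z} = e" using edge_same[of "{j,z}" e z] e that by simp
          then show False using False by auto
        qed
        ultimately show ?thesis unfolding R_def by simp
      qed
      then show ?thesis by auto
    qed
  qed
  show ?thesis
    by (rule mom_factor[OF card2 closed]) (use j k jk ne in \<open>auto simp: R_def\<close>)
qed

lemma a_pos: "j < m \<Longrightarrow> ising_acc m thY th thE E j > 0"
proof -
  assume j: "j < m"
  show ?thesis
  proof (cases "\<exists>e\<in>E. j \<in> e")
    case True
    then obtain e where e: "e \<in> E" "j \<in> e" by blast
    then obtain x y where exy: "e = {x,y}" "x \<noteq> y" using card2 unfolding card_2_iff by blast
    then obtain p where p: "e = {j,p}" using e by auto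
    have jp: "j \<noteq> p" using edge_ne e p by simp
    have pm: "p < m" using edge_lt e p by simp
    show ?thesis
      by (rule acc_pos_pair[OF finE fin_e j pm jp _ E_disj])
         (use e p th_pos thE_pos j pm in \<open>auto simp: less_imp_le\<close>)
  next
    case False
    then show ?thesis using acc_pos_single[OF finE fin_e j] th_pos j by auto
  qed
qed

lemma exists_nonpartner: "j < m \<Longrightarrow> \<exists>k<m. k \<noteq> j \<and> {j,k} \<notin> E"
proof -
  assume j: "j < m"
  define k1 where "k1 = (if j = 0 then 1 else 0::nat)"
  define k2 where "k2 = (if j = 2 then 1 else 2::nat)"
  have k: "k1 < m" "k2 < m" "k1 \<noteq> j" "k2 \<noteq> j" "k1 \<noteq> k2" using m3 unfolding k1_def k2_def by auto
  show ?thesis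
  proof (cases "{j,k1} \<in> E")
    case True
    then have "{j,k2} \<notin> E" using edge_uniq[OF True, of k2] k by auto
    then show ?thesis using k by blast
  qed (use k in blast)
qed

lemma b_le_a: "j < m \<Longrightarrow> bmin \<le> ising_acc m thY th thE E j"
proof -
  assume j: "j < m"
  then obtain k where k: "k < m" "k \<noteq> j" "{j,k} \<notin> E" using exists_nonpartner by blast
  have "bmin \<le> ising_mom m thY th thE E j k" using bmin_le j k by auto
  also have "\<dots> = ising_acc m thY th thE E j * ising_acc m thY th thE E k"
    using noedge_factor[OF j k(1)] k by auto
  also have "\<dots> \<le> ising_acc m thY th thE E j * 1"
    using a_pos[OF j] a_le1[OF k(1)] by (intro mult_left_mono) auto
  finally show ?thesis by simp
qed

lemma b_le1: "bmin \<le> 1"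
proof -
  have "bmin \<le> ising_mom m thY th thE E 0 1" using bmin_le m3 by auto
  also have "\<dots> \<le> 1" using M_le1[of 0 1] m3 by auto
  finally show ?thesis .
qed

lemma amin_le: "j < m \<Longrightarrow> ising_amin m thY th thE E \<le> ising_acc m thY th thE E j"
  unfolding ising_amin_def by (rule Min_le) auto

lemma amin_pos: "ising_amin m thY th thE E > 0"
proof -
  have "ising_amin m thY th thE E \<in> ising_acc m thY th thE E ` {0..<m}"
    unfolding ising_amin_def using m3 by (intro Min_in) auto
  then show ?thesis using a_pos by auto
qed

lemma amin_le1: "ising_amin m thY th thE E \<le> 1"
  using amin_le[of 0] a_le1[of 0] m3 by force

lemma alg1: "(u::real) > 0 \<Longrightarrow> v > 0 \<Longrightarrow> b > 0 \<Longrightarrow> c > 0 \<Longrightarrow>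
   2 * (v * (e / (2 * b * c))) / (u * v) = e / (u * b * c)"
  by (simp add: field_simps)

lemma alg2: "(u::real) > 0 \<Longrightarrow> v > 0 \<Longrightarrow> b > 0 \<Longrightarrow> c > 0 \<Longrightarrow>
   (2 * (v * (e1 * b / 2) + d * (- (e2 / (2 * b^2 * c^2))))) / (u * v)
   = e1 * b / u - d * e2 / (u * v * b ^ 2 * c ^ 2)"
  by (simp add: field_simps)

definition Tf :: "nat \<Rightarrow> nat \<Rightarrow> nat \<Rightarrow> real" where
  "Tf i j k = sqrt (ising_mom m thY th thE E i j * ising_mom m thY th thE E i k / ising_mom m thY th thE E j k)"

lemma N_pos: "i < m \<Longrightarrow> real (card (other_pairs m i)) > 0"
proof -
  assume i: "i < m"
  have h: "real (card (other_pairs m i)) = (real m - 1) * (real m - 2) / 2"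
    by (rule card_other_pairs_real[OF i m3])
  have "(real m - 1) * (real m - 2) > 0" using m3 by (intro mult_pos_pos) auto
  then show ?thesis using h by simp
qed

lemma abar_diff:
  assumes i: "i < m"
  shows "ising_abar m thY th thE E i - ising_acc m thY th thE E i
    = (\<Sum>p\<in>other_pairs m i. Tf i (fst p) (snd p) - ising_acc m thY th thE E i) / real (card (other_pairs m i))"
proof -
  have eq: "(\<Sum>(j, k)\<in>other_pairs m i. sqrt (ising_mom m thY th thE E i j * ising_mom m thY th thE E i k
              / ising_mom m thY th thE E j k)) = (\<Sum>p\<in>other_pairs m i. Tf i (fst p) (snd p))"
    unfolding Tf_def by (simp add: case_prod_beta)
  show ?thesis unfolding ising_abar_def eq sum_subtractf using N_pos[OF i]
    by (simp add: field_simps)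
qed

lemma T_plain:
  assumes i: "i < m" and j: "j < m" and k: "k < m" and ij: "i \<noteq> j" "i \<noteq> k" "j \<noteq> k"
    and ne: "{i,j} \<notin> E" "{i,k} \<notin> E" "{j,k} \<notin> E"
  shows "Tf i j k = ising_acc m thY th thE E i"
proof -
  have "Tf i j k = sqrt (ising_acc m thY th thE E i * ising_acc m thY th thE E i)"
    unfolding Tf_def noedge_factor[OF i j ij(1) ne(1)] noedge_factor[OF i k ij(2) ne(2)] noedge_factor[OF j k ij(3) ne(3)]
    using a_pos[OF j] a_pos[OF k] by (simp add: field_simps)
  then show ?thesis using a_pos[OF i] by simp
qed

lemma T_edge:
  assumes i: "i < m" and j: "j < m" and k: "k < m" and ij: "i \<noteq> j" "i \<noteq> k" "j \<noteq> k"
    and ne: "{i,j} \<notin> E" "{i,k} \<notin> E" and ejk: "{j,k} \<in> E"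
    and eps: "ising_mom m thY th thE E j k - ising_acc m thY th thE E j * ising_acc m thY th thE E k > 0"
  defines "x \<equiv> ising_acc m thY th thE E j * ising_acc m thY th thE E k"
  defines "ep \<equiv> ising_mom m thY th thE E j k - ising_acc m thY th thE E j * ising_acc m thY th thE E k"
  shows "Tf i j k - ising_acc m thY th thE E i \<le> - (ep * bmin^2 / 2)"
    and "Tf i j k - ising_acc m thY th thE E i \<ge> - (ep / (2 * bmin^2 * (ising_amin m thY th thE E)^2))"
    and "Tf i j k - ising_acc m thY th thE E i \<le> 0"
proof -
  let ?A = "ising_acc m thY th thE E i"
  let ?c = "ising_amin m thY th thE E"
  have M: "ising_mom m thY th thE E j k = x + ep" unfolding x_def ep_def by simp
  have T: "Tf i j k = sqrt (?A * ?A * (x / (x + ep)))"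
    unfolding Tf_def noedge_factor[OF i j ij(1) ne(1)] noedge_factor[OF i k ij(2) ne(2)] M
    unfolding x_def by (simp add: algebra_simps)
  have cx: "?c * ?c \<le> x" unfolding x_def
    using amin_le[OF j] amin_le[OF k] amin_pos by (intro mult_mono) (auto simp: less_imp_le)
  have "bmin \<le> ising_mom m thY th thE E j k" using bmin_le j k ij(3) by blast
  then have bM: "bmin \<le> x + ep" using M by simp
  have M1: "x + ep \<le> 1" using M_le1[OF j k] M by simp
  have epp: "ep > 0" using eps unfolding ep_def .
  note te = term_edge[OF epp bmin_pos b_le1 bM M1 amin_pos amin_le1 cx b_le_a[OF i] a_le1[OF i]]
  show "Tf i j k - ?A \<le> - (ep * bmin^2 / 2)" using te(1) T by simp
  show "Tf i j k - ?A \<ge> - (ep / (2 * bmin^2 * ?c^2))" using te(2) T by simp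
  show "Tf i j k - ?A \<le> 0" using te(3) T by simp
qed

lemma T_partner:
  assumes i: "i < m" and p: "p < m" and q: "q < m" and ij: "i \<noteq> p" "i \<noteq> q" "p \<noteq> q"
    and eip: "{i,p} \<in> E" and ne: "{i,q} \<notin> E" "{p,q} \<notin> E"
    and eps: "ising_mom m thY th thE E i p - ising_acc m thY th thE E i * ising_acc m thY th thE E p > 0"
  defines "ep \<equiv> ising_mom m thY th thE E i p - ising_acc m thY th thE E i * ising_acc m thY th thE E p"
  shows "Tf i p q - ising_acc m thY th thE E i \<le> ep / (2 * bmin * ising_amin m thY th thE E)"
    and "Tf i p q - ising_acc m thY th thE E i \<ge> ep * bmin / 2"
    and "Tf i q p = Tf i p q"
proof -
  let ?A = "ising_acc m thY th thE E i"
  let ?P = "ising_acc m thY th thE E p"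
  let ?Q = "ising_acc m thY th thE E q"
  let ?c = "ising_amin m thY th thE E"
  have M: "ising_mom m thY th thE E i p = ?A * ?P + ep" unfolding ep_def by simp
  have Q0: "?Q > 0" using a_pos[OF q] .
  have T: "Tf i p q = sqrt (?A * ?A * ((?A * ?P + ep) / (?A * ?P)))"
  proof -
    have "(?A * ?P + ep) * (?A * ?Q) / (?P * ?Q) = ?A * ?A * ((?A * ?P + ep) / (?A * ?P))"
      using Q0 a_pos[OF i] a_pos[OF p] by (simp add: field_simps)
    then show ?thesis
      unfolding Tf_def noedge_factor[OF i q ij(2) ne(1)] noedge_factor[OF p q ij(3) ne(2)] M by simp
  qed
  have M1: "?A * ?P + ep \<le> 1" using M_le1[OF i p] M by simp
  have epp: "ep > 0" using eps unfolding ep_def .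
  note tp = term_partner[OF epp bmin_pos b_le1 M1 amin_pos amin_le[OF p] a_le1[OF p] b_le_a[OF i] a_le1[OF i] b_le_a[OF p]]
  show "Tf i p q - ?A \<le> ep / (2 * bmin * ?c)" using tp(1) T by simp
  show "Tf i p q - ?A \<ge> ep * bmin / 2" using tp(2) T by simp
  show "Tf i q p = Tf i p q" unfolding Tf_def by (simp add: M_sym[of q p] mult.commute)
qed

lemma finP: "finite (other_pairs m i)"
  by (rule finite_subset[of _ "{0..<m} \<times> {0..<m}"]) (auto simp: other_pairs_def)

lemma memP: "x \<in> other_pairs m i \<Longrightarrow> fst x < snd x \<and> snd x < m \<and> fst x \<noteq> i \<and> snd x \<noteq> i"
  unfolding other_pairs_def by auto

lemma K_pos: "(real m - 1) * (real m - 2) > 0" using m3 by (intro mult_pos_pos) auto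

lemma case_noedge:
  assumes epsmin_pos: "epsmin > 0"
    and eps_bounds: "\<forall>j k. {j, k} \<in> E \<longrightarrow>
         epsmin \<le> ising_mom m thY th thE E j k - ising_acc m thY th thE E j * ising_acc m thY th thE E k
       \<and> ising_mom m thY th thE E j k - ising_acc m thY th thE E j * ising_acc m thY th thE E k \<le> epsmax"
    and i: "i < m" and noe: "\<forall>e\<in>E. i \<notin> e"
  shows "- real (card E) * epsmax
                / ((real m - 1) * (real m - 2) * bmin ^ 2 * (ising_amin m thY th thE E) ^ 2)
            \<le> ising_abar m thY th thE E i - ising_acc m thY th thE E i
          \<and> ising_abar m thY th thE E i - ising_acc m thY th thE E i
            \<le> - real (card E) * epsmin * bmin ^ 2 / ((real m - 1) * (real m - 2))"
proof -
  define P where "P = other_pairs m i"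
  define D where "D x = Tf i (fst x) (snd x) - ising_acc m thY th thE E i" for x
  define Q where "Q = {x\<in>P. {fst x, snd x} \<in> E}"
  let ?c = "ising_amin m thY th thE E"
  have ni: "{i,j} \<notin> E" for j using noe by auto
  have D0: "D x = 0" if "x \<in> P - Q" for x
  proof -
    have x: "fst x < snd x" "snd x < m" "fst x \<noteq> i" "snd x \<noteq> i" using memP[of x i] that unfolding P_def by auto
    have "{fst x, snd x} \<notin> E" using that unfolding Q_def by auto
    then show ?thesis unfolding D_def using T_plain[OF i _ x(2)] x ni by simp
  qed
  have sumQ: "sum D P = sum D Q"
    by (rule sum.mono_neutral_right) (use finP D0 in \<open>auto simp: P_def Q_def\<close>)
  have cardQ: "card Q = card E"
  proof -
    have "(\<lambda>(j,k). {j,k}) ` Q = E"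
    proof (intro equalityI subsetI)
      fix e assume "e \<in> (\<lambda>(j,k). {j,k}) ` Q"
      then show "e \<in> E" unfolding Q_def by auto
    next
      fix e assume e: "e \<in> E"
      then obtain x y where exy: "e = {x,y}" "x \<noteq> y" using card2 unfolding card_2_iff by blast
      have "x < m" "y < m" using edge_lt e exy by auto
      moreover have "x \<noteq> i" "y \<noteq> i" using noe e exy by auto
      ultimately have "(min x y, max x y) \<in> Q" using e exy unfolding Q_def P_def other_pairs_def
        by (auto simp: min_def max_def insert_commute)
      moreover have "e = (\<lambda>(j,k). {j,k}) (min x y, max x y)" using exy by (auto simp: min_def max_def)
      ultimately show "e \<in> (\<lambda>(j,k). {j,k}) ` Q" by blast
    qed
    moreover have "Q \<subseteq> {(j,k). j < k}" unfolding Q_def P_def other_pairs_def by auto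
    ultimately show ?thesis using card_pairs_img by metis
  qed
  have Dbounds: "D x \<le> - (epsmin * bmin^2 / 2) \<and> D x \<ge> - (epsmax / (2 * bmin^2 * ?c^2))" if "x \<in> Q" for x
  proof -
    have x: "fst x < snd x" "snd x < m" "fst x \<noteq> i" "snd x \<noteq> i" "{fst x, snd x} \<in> E"
      using memP[of x i] that unfolding P_def Q_def by auto
    define ep where "ep = ising_mom m thY th thE E (fst x) (snd x) - ising_acc m thY th thE E (fst x) * ising_acc m thY th thE E (snd x)"
    have epb: "epsmin \<le> ep" "ep \<le> epsmax" using eps_bounds x(5) unfolding ep_def by auto
    have epp: "ep > 0" using epb epsmin_pos by simp
    have j: "fst x < m" using x by simp
    note te = T_edge[OF i j x(2) _ _ _ ni ni x(5) epp[unfolded ep_def]]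
    have t1: "D x \<le> - (ep * bmin^2 / 2)" "D x \<ge> - (ep / (2 * bmin^2 * ?c^2))"
      using te x unfolding D_def ep_def by auto
    have "ep * bmin^2 / 2 \<ge> epsmin * bmin^2 / 2" using epb by (simp add: mult_right_mono)
    moreover have "ep / (2 * bmin^2 * ?c^2) \<le> epsmax / (2 * bmin^2 * ?c^2)"
      using epb bmin_pos amin_pos by (simp add: divide_right_mono)
    ultimately show ?thesis using t1 by linarith
  qed
  have up: "sum D Q \<le> real (card E) * (- (epsmin * bmin^2 / 2))"
    using sum_bounded_above[of Q D "- (epsmin * bmin^2 / 2)"] Dbounds cardQ by auto
  have lo: "sum D Q \<ge> real (card E) * (- (epsmax / (2 * bmin^2 * ?c^2)))"
    using sum_bounded_below[of Q "- (epsmax / (2 * bmin^2 * ?c^2))" D] Dbounds cardQ by auto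
  define K where "K = (real m - 1) * (real m - 2)"
  have K: "K > 0" unfolding K_def using K_pos .
  have diff: "ising_abar m thY th thE E i - ising_acc m thY th thE E i = 2 * sum D Q / K"
  proof -
    have "ising_abar m thY th thE E i - ising_acc m thY th thE E i = sum D P / real (card P)"
      unfolding abar_diff[OF i] P_def D_def by simp
    also have "\<dots> = sum D Q / (K / 2)" unfolding sumQ by (simp add: P_def card_other_pairs_real[OF i m3] K_def)
    finally show ?thesis by simp
  qed
  have "2 * sum D Q / K \<le> (- real (card E) * epsmin * bmin ^ 2) / K"
    using up K by (intro divide_right_mono) auto
  moreover have "(- real (card E) * epsmax / (K * bmin ^ 2 * ?c ^ 2)) \<le> 2 * sum D Q / K"
  proof -
    have "(- real (card E) * epsmax / (bmin ^ 2 * ?c ^ 2)) / K \<le> 2 * sum D Q / K"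
      using lo K by (intro divide_right_mono) (auto simp: field_simps)
    then show ?thesis by (simp add: field_simps)
  qed
  ultimately show ?thesis unfolding diff K_def by (simp add: mult.assoc)
qed

lemma case_edge:
  assumes epsmin_pos: "epsmin > 0"
    and eps_bounds: "\<forall>j k. {j, k} \<in> E \<longrightarrow>
         epsmin \<le> ising_mom m thY th thE E j k - ising_acc m thY th thE E j * ising_acc m thY th thE E k
       \<and> ising_mom m thY th thE E j k - ising_acc m thY th thE E j * ising_acc m thY th thE E k \<le> epsmax"
    and i: "i < m" and eip: "{i,p} \<in> E"
  shows "epsmin * bmin / (real m - 1)
              - (real (card E) - 1) * epsmax
                / ((real m - 1) * (real m - 2) * bmin ^ 2 * (ising_amin m thY th thE E) ^ 2)
            \<le> ising_abar m thY th thE E i - ising_acc m thY th thE E i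
          \<and> ising_abar m thY th thE E i - ising_acc m thY th thE E i
            \<le> epsmax / ((real m - 1) * bmin * ising_amin m thY th thE E)"
proof -
  define P where "P = other_pairs m i"
  define D where "D x = Tf i (fst x) (snd x) - ising_acc m thY th thE E i" for x
  define Q1 where "Q1 = {x\<in>P. fst x = p \<or> snd x = p}"
  define Q2 where "Q2 = {x\<in>P. {fst x, snd x} \<in> E}"
  let ?c = "ising_amin m thY th thE E"
  have ip: "i \<noteq> p" using edge_ne[OF eip] .
  have p: "p < m" using edge_lt[OF eip] by simp
  have ni: "{i,j} \<notin> E" if "j \<noteq> p" for j using edge_uniq[OF eip, of j] that by auto
  have np: "{p,j} \<notin> E" if "j \<noteq> i" for j
  proof
    assume "{p,j} \<in> E"
    then have "{p,j} = {i,p}" using edge_same[of "{p,j}" "{i,p}" p] eip by simp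
    then show False using that ip by (auto simp: doubleton_eq_iff)
  qed
  have D0: "D x = 0" if "x \<in> P - (Q1 \<union> Q2)" for x
  proof -
    have x: "fst x < snd x" "snd x < m" "fst x \<noteq> i" "snd x \<noteq> i" using memP[of x i] that unfolding P_def by auto
    have "{fst x, snd x} \<notin> E" "fst x \<noteq> p" "snd x \<noteq> p" using that unfolding Q1_def Q2_def by auto
    then show ?thesis unfolding D_def using T_plain[OF i _ x(2)] x ni by simp
  qed
  have disj: "Q1 \<inter> Q2 = {}"
  proof (rule ccontr)
    assume "Q1 \<inter> Q2 \<noteq> {}"
    then obtain x where x: "x \<in> Q1" "x \<in> Q2" by blast
    have xm: "fst x \<noteq> i" "snd x \<noteq> i" using memP[of x i] x unfolding Q1_def P_def by auto
    have e: "{fst x, snd x} \<in> E" using x unfolding Q2_def by auto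
    show False
    proof (cases "fst x = p")
      case True then show ?thesis using np[OF xm(2)] e by simp
    next
      case False then have "snd x = p" using x unfolding Q1_def by auto
      then show ?thesis using np[OF xm(1)] e by (simp add: insert_commute)
    qed
  qed
  have fin1: "finite Q1" "finite Q2" using finP unfolding Q1_def Q2_def P_def by auto
  have sumQ: "sum D P = sum D Q1 + sum D Q2"
  proof -
    have "sum D P = sum D (Q1 \<union> Q2)"
      by (rule sum.mono_neutral_right) (use finP D0 in \<open>auto simp: P_def Q1_def Q2_def\<close>)
    also have "\<dots> = sum D Q1 + sum D Q2" using sum.union_disjoint[OF fin1 disj] .
    finally show ?thesis .
  qed
  have cardQ1: "card Q1 = m - 2"
  proof -
    define g where "g q = (min p q, max p q)" for q
    have inj: "inj_on g ({0..<m} - {i,p})" unfolding inj_on_def g_def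
      by (auto simp: min_def max_def split: if_splits)
    have img: "g ` ({0..<m} - {i,p}) = Q1"
    proof (intro equalityI subsetI)
      fix x assume "x \<in> g ` ({0..<m} - {i,p})"
      then obtain q where qA: "q \<in> {0..<m} - {i,p}" and qx: "x = g q" by blast
      then have q: "q < m" "q \<noteq> i" "q \<noteq> p" "x = g q" by auto
      then show "x \<in> Q1" unfolding Q1_def P_def other_pairs_def g_def using p ip
        by (auto simp: min_def max_def)
    next
      fix x assume x: "x \<in> Q1"
      have xm: "fst x < snd x" "snd x < m" "fst x \<noteq> i" "snd x \<noteq> i" using memP[of x i] x unfolding Q1_def P_def by auto
      show "x \<in> g ` ({0..<m} - {i,p})"
      proof (cases "fst x = p")
        case True
        then have "x = g (snd x)" unfolding g_def using xm by (cases x) auto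
        moreover have "snd x \<in> {0..<m} - {i,p}" using xm True by auto
        ultimately show ?thesis by blast
      next
        case False
        then have sp: "snd x = p" using x unfolding Q1_def by auto
        then have "x = g (fst x)" unfolding g_def using xm by (cases x) auto
        moreover have "fst x \<in> {0..<m} - {i,p}" using xm sp by auto
        ultimately show ?thesis by blast
      qed
    qed
    have "card ({0..<m} - {i,p}) = m - 2"
    proof -
      have "card ({0..<m} - {i,p}) = card {0..<m} - card {i,p}" using i p by (intro card_Diff_subset) auto
      then show ?thesis using ip by simp
    qed
    then show ?thesis using card_image[OF inj] img by simp
  qed
  have cardQ2: "card Q2 = card E - 1"
  proof -
    have "(\<lambda>(j,k). {j,k}) ` Q2 = E - {{i,p}}"
    proof (intro equalityI subsetI)
      fix e assume "e \<in> (\<lambda>(j,k). {j,k}) ` Q2"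
      then obtain x where x: "x \<in> Q2" "e = {fst x, snd x}" by auto
      have "fst x \<noteq> i" "snd x \<noteq> i" using memP[of x i] x unfolding Q2_def P_def by auto
      then show "e \<in> E - {{i,p}}" using x unfolding Q2_def by (auto simp: doubleton_eq_iff)
    next
      fix e assume e: "e \<in> E - {{i,p}}"
      then obtain x y where exy: "e = {x,y}" "x \<noteq> y" using card2 unfolding card_2_iff by blast
      have "x < m" "y < m" using edge_lt e exy by auto
      moreover have "x \<noteq> i" "y \<noteq> i" using edge_same[of e "{i,p}" i] e eip exy by auto
      ultimately have "(min x y, max x y) \<in> Q2" using e exy unfolding Q2_def P_def other_pairs_def
        by (auto simp: min_def max_def insert_commute)
      moreover have "e = (\<lambda>(j,k). {j,k}) (min x y, max x y)" using exy by (auto simp: min_def max_def)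
      ultimately show "e \<in> (\<lambda>(j,k). {j,k}) ` Q2" by blast
    qed
    moreover have "Q2 \<subseteq> {(j,k). j < k}" unfolding Q2_def P_def other_pairs_def by auto
    ultimately have "card Q2 = card (E - {{i,p}})" using card_pairs_img by metis
    then show ?thesis using eip finE by simp
  qed
  have cE: "real (card E - 1) = real (card E) - 1"
  proof -
    have "card E \<ge> 1" using eip finE by (metis One_nat_def card_0_eq empty_iff less_one not_le)
    then show ?thesis by (simp add: of_nat_diff)
  qed
  define ep where "ep = ising_mom m thY th thE E i p - ising_acc m thY th thE E i * ising_acc m thY th thE E p"
  have epb: "epsmin \<le> ep" "ep \<le> epsmax" using eps_bounds eip unfolding ep_def by auto
  have epp: "ep > 0" using epb epsmin_pos by simp
  have D1: "D x \<le> epsmax / (2 * bmin * ?c) \<and> D x \<ge> epsmin * bmin / 2" if "x \<in> Q1" for x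
  proof -
    have xm: "fst x < snd x" "snd x < m" "fst x \<noteq> i" "snd x \<noteq> i" using memP[of x i] that unfolding Q1_def P_def by auto
    obtain q where q: "q < m" "q \<noteq> i" "q \<noteq> p" "D x = Tf i p q - ising_acc m thY th thE E i"
    proof (cases "fst x = p")
      case True
      then show ?thesis using that[of "snd x"] xm unfolding D_def by auto
    next
      case False
      then have sp: "snd x = p" using \<open>x \<in> Q1\<close> unfolding Q1_def by auto
      have "q' < m \<Longrightarrow> q' \<noteq> i \<Longrightarrow> q' \<noteq> p \<Longrightarrow> Tf i q' p = Tf i p q'" for q'
        using T_partner(3)[OF i p _ ip _ _ eip ni np epp[unfolded ep_def]] by auto
      then show ?thesis using that[of "fst x"] xm sp False unfolding D_def by auto
    qed
    note tp = T_partner[OF i p q(1) ip q(2)[symmetric] q(3)[symmetric] eip ni[OF q(3)] np[OF q(2)] epp[unfolded ep_def]]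
    have t1: "D x \<le> ep / (2 * bmin * ?c)" "D x \<ge> ep * bmin / 2" using tp q(4) unfolding ep_def by auto
    have "ep / (2 * bmin * ?c) \<le> epsmax / (2 * bmin * ?c)"
      using epb bmin_pos amin_pos by (simp add: divide_right_mono)
    moreover have "ep * bmin / 2 \<ge> epsmin * bmin / 2" using epb bmin_pos by (simp add: mult_right_mono)
    ultimately show ?thesis using t1 by linarith
  qed
  have D2: "D x \<le> 0 \<and> D x \<ge> - (epsmax / (2 * bmin^2 * ?c^2))" if "x \<in> Q2" for x
  proof -
    have x: "fst x < snd x" "snd x < m" "fst x \<noteq> i" "snd x \<noteq> i" "{fst x, snd x} \<in> E"
      using memP[of x i] that unfolding P_def Q2_def by auto
    have xp: "fst x \<noteq> p" "snd x \<noteq> p" using that disj unfolding Q1_def Q2_def by auto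
    define ep' where "ep' = ising_mom m thY th thE E (fst x) (snd x) - ising_acc m thY th thE E (fst x) * ising_acc m thY th thE E (snd x)"
    have epb': "epsmin \<le> ep'" "ep' \<le> epsmax" using eps_bounds x(5) unfolding ep'_def by auto
    have epp': "ep' > 0" using epb' epsmin_pos by simp
    have j: "fst x < m" using x by simp
    note te = T_edge[OF i j x(2) _ _ _ ni[OF xp(1)] ni[OF xp(2)] x(5) epp'[unfolded ep'_def]]
    have t1: "D x \<le> 0" "D x \<ge> - (ep' / (2 * bmin^2 * ?c^2))"
      using te x unfolding D_def ep'_def by auto
    moreover have "ep' / (2 * bmin^2 * ?c^2) \<le> epsmax / (2 * bmin^2 * ?c^2)"
      using epb' bmin_pos amin_pos by (simp add: divide_right_mono)
    ultimately show ?thesis by linarith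
  qed
  have up1: "sum D Q1 \<le> real (m - 2) * (epsmax / (2 * bmin * ?c))"
    using sum_bounded_above[of Q1 D "epsmax / (2 * bmin * ?c)"] D1 cardQ1 by auto
  have lo1: "sum D Q1 \<ge> real (m - 2) * (epsmin * bmin / 2)"
    using sum_bounded_below[of Q1 "epsmin * bmin / 2" D] D1 cardQ1 by auto
  have up2: "sum D Q2 \<le> 0" using sum_nonpos[of Q2 D] D2 by auto
  have lo2: "sum D Q2 \<ge> (real (card E) - 1) * (- (epsmax / (2 * bmin^2 * ?c^2)))"
    using sum_bounded_below[of Q2 "- (epsmax / (2 * bmin^2 * ?c^2))" D] D2 cardQ2 cE by auto
  define K where "K = (real m - 1) * (real m - 2)"
  have K: "K > 0" unfolding K_def using K_pos .
  have m2: "real (m - 2) = real m - 2" using m3 by (simp add: of_nat_diff)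
  have diff: "ising_abar m thY th thE E i - ising_acc m thY th thE E i = 2 * (sum D Q1 + sum D Q2) / K"
  proof -
    have "ising_abar m thY th thE E i - ising_acc m thY th thE E i = sum D P / real (card P)"
      unfolding abar_diff[OF i] P_def D_def by simp
    also have "\<dots> = (sum D Q1 + sum D Q2) / (K / 2)" unfolding sumQ by (simp add: P_def card_other_pairs_real[OF i m3] K_def)
    finally show ?thesis by simp
  qed
  have bc: "bmin * ?c > 0" using bmin_pos amin_pos by simp
  have m1: "real m - 1 > 0" "real m - 2 > 0" using m3 by auto
  have U: "2 * (sum D Q1 + sum D Q2) / K \<le> epsmax / ((real m - 1) * bmin * ?c)"
  proof -
    have "2 * (sum D Q1 + sum D Q2) / K \<le> (2 * (real (m - 2) * (epsmax / (2 * bmin * ?c)))) / K"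
      apply (rule divide_right_mono) apply (rule mult_left_mono) using add_mono[OF up1 up2] apply simp apply simp using K by simp
    also have "\<dots> = epsmax / ((real m - 1) * bmin * ?c)"
      unfolding m2 K_def by (rule alg1[OF m1 bmin_pos amin_pos])
    finally show ?thesis .
  qed
  have L: "epsmin * bmin / (real m - 1) - (real (card E) - 1) * epsmax / (K * bmin ^ 2 * ?c ^ 2)
       \<le> 2 * (sum D Q1 + sum D Q2) / K"
  proof -
    have "(2 * (real (m - 2) * (epsmin * bmin / 2) + (real (card E) - 1) * (- (epsmax / (2 * bmin^2 * ?c^2))))) / K
        \<le> 2 * (sum D Q1 + sum D Q2) / K"
      apply (rule divide_right_mono) apply (rule mult_left_mono) using add_mono[OF lo1 lo2] apply simp apply simp using K by simp
    moreover have "(2 * (real (m - 2) * (epsmin * bmin / 2) + (real (card E) - 1) * (- (epsmax / (2 * bmin^2 * ?c^2))))) / K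
        = epsmin * bmin / (real m - 1) - (real (card E) - 1) * epsmax / (K * bmin ^ 2 * ?c ^ 2)"
      unfolding m2 K_def by (rule alg2[OF m1 bmin_pos amin_pos])
    ultimately show ?thesis by simp
  qed
  show ?thesis using U L unfolding diff K_def by (simp add: mult.assoc)
qed

end


theorem lemma1:
  fixes m :: nat and thY :: real and th :: "nat \<Rightarrow> real"
    and thE :: "nat set \<Rightarrow> real" and E :: "nat set set"
    and bmin epsmin epsmax :: real and i :: nat
  assumes m3: "m \<ge> 3"
    and E_pairs: "\<forall>e\<in>E. e \<subseteq> {0..<m} \<and> card e = 2"
    and E_disj: "\<forall>e\<in>E. \<forall>e'\<in>E. e \<noteq> e' \<longrightarrow> e \<inter> e' = {}"
    and thY_pos: "thY > 0"
    and th_pos: "\<forall>j<m. th j > 0"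
    and thE_pos: "\<forall>e\<in>E. thE e > 0"
    and bmin_pos: "bmin > 0"
    and bmin_le: "\<forall>j<m. \<forall>k<m. j \<noteq> k \<longrightarrow> bmin \<le> ising_mom m thY th thE E j k"
    and epsmin_pos: "epsmin > 0"
    and eps_bounds: "\<forall>j k. {j, k} \<in> E \<longrightarrow>
         epsmin \<le> ising_mom m thY th thE E j k
                    - ising_acc m thY th thE E j * ising_acc m thY th thE E k
       \<and> ising_mom m thY th thE E j k
                    - ising_acc m thY th thE E j * ising_acc m thY th thE E k \<le> epsmax"
    and i_lt: "i < m"
  shows "((\<exists>e\<in>E. i \<in> e) \<longrightarrow>
            epsmin * bmin / (real m - 1)
              - (real (card E) - 1) * epsmax
                / ((real m - 1) * (real m - 2) * bmin ^ 2 * (ising_amin m thY th thE E) ^ 2)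
            \<le> ising_abar m thY th thE E i - ising_acc m thY th thE E i
          \<and> ising_abar m thY th thE E i - ising_acc m thY th thE E i
            \<le> epsmax / ((real m - 1) * bmin * ising_amin m thY th thE E))
       \<and> ((\<forall>e\<in>E. i \<notin> e) \<longrightarrow>
            - real (card E) * epsmax
                / ((real m - 1) * (real m - 2) * bmin ^ 2 * (ising_amin m thY th thE E) ^ 2)
            \<le> ising_abar m thY th thE E i - ising_acc m thY th thE E i
          \<and> ising_abar m thY th thE E i - ising_acc m thY th thE E i
            \<le> - real (card E) * epsmin * bmin ^ 2 / ((real m - 1) * (real m - 2)))"
proof -
  note ctx = m3 E_pairs E_disj th_pos thE_pos bmin_pos bmin_le
  have card2': "\<forall>e\<in>E. card e = 2" using E_pairs by auto
  show ?thesis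
  proof (intro conjI impI)
    assume "\<exists>e\<in>E. i \<in> e"
    then obtain e where e: "e \<in> E" "i \<in> e" by blast
    then obtain x y where exy: "e = {x,y}" "x \<noteq> y" using card2' unfolding card_2_iff by blast
    then obtain p where p: "e = {i,p}" using e by auto
    note r = case_edge[OF ctx epsmin_pos eps_bounds i_lt, of p]
    show "epsmin * bmin / (real m - 1)
              - (real (card E) - 1) * epsmax
                / ((real m - 1) * (real m - 2) * bmin ^ 2 * (ising_amin m thY th thE E) ^ 2)
            \<le> ising_abar m thY th thE E i - ising_acc m thY th thE E i"
      using r e p by auto
    show "ising_abar m thY th thE E i - ising_acc m thY th thE E i
            \<le> epsmax / ((real m - 1) * bmin * ising_amin m thY th thE E)"
      using r e p by auto
  next
    assume noe: "\<forall>e\<in>E. i \<notin> e"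
    note r = case_noedge[OF ctx epsmin_pos eps_bounds i_lt noe]
    show "- real (card E) * epsmax
                / ((real m - 1) * (real m - 2) * bmin ^ 2 * (ising_amin m thY th thE E) ^ 2)
            \<le> ising_abar m thY th thE E i - ising_acc m thY th thE E i" using r by auto
    show "ising_abar m thY th thE E i - ising_acc m thY th thE E i
            \<le> - real (card E) * epsmin * bmin ^ 2 / ((real m - 1) * (real m - 2))" using r by auto
  qed
qed

end
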